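(* Let $\widetilde{T_k},\widetilde{S_k}\in J(Z)$ ($k=1,\dots,m$) be any polynomials whose images under the canonical homomorphism $J(Z)\to J(B_m)$ are $T_k$ and $S_k$ respectively. Consider the set $\mathcal P$ of polynomials $$x_1^{k_0}(\widetilde{S_m})^{\delta_m}\cdots(\widetilde{S_1})^{\delta_1}(\widetilde{T_m})^{k_m}\cdots(\widetilde{T_1})^{k_1},$$ (with any fixed arrangement of parentheses) where $k_0,\dots,k_m\ge0$, $\delta_l\in\{0,1\}$ and $\delta_l\ne0$ for at most one $l\in\{1,\dots,m\}$. Then for every subset $S\subseteq\mathcal P$ there is a finite subset $\widehat S\subseteq S$ such that every polynomial in $S$ is a consequence of $\widehat S\cup\mathrm{Id}_2(B_m)$, i.e. belongs to the $T_2$-ideal of $J(Z)$ generated by $\widehat S\cup \mathrm{Id}_2(B_m)$.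
   Context: $K$ is a field of characteristic zero, $m>1$, and $B_m=K\oplus V$ is the Jordan algebra of a nondegenerate symmetric bilinear form $f$ on an $m$-dimensional space $V$, with product $(\alpha+u)(\beta+v)=(\alpha\beta+f(u,v))+(\alpha v+\beta u)$ and grading $(B_m)_0=K$, $(B_m)_1=V$. $J(Z)$ is the free Jordan algebra on even variables $x_1,x_2,\dots$ and odd variables $y_1,y_2,\dots$, graded by parity of the number of $y$'s; $\mathrm{Id}_2(B_m)$ is the ideal of graded identities of $B_m$ (polynomials vanishing under all substitutions of $x$'s by elements of $K$ and $y$'s by elements of $V$); a $T_2$-ideal is an ideal of $J(Z)$ invariant under all grading-preserving endomorphisms; $J(B_m)=J(Z)/\mathrm{Id}_2(B_m)$. In $J(B_m)$: $T_j=\det(y_ay_b)_{a,b=1}^j$ and $S_j=\sum_{\sigma\in S_j}(-1)^\sigma y_{\sigma(1)}(y_1y_{\sigma(2)})\cdots(y_{j-1}y_{\sigma(j)})$, products of several factors being independent of bracketing in $J(B_m)$. $x_1^{0}$ and zero exponents mean the factor is omitted. *)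

theory Defs
  imports "HOL-Combinatorics.Permutations"
begin

text \<open>Xv i is the even variable x_i, Yv i the odd variable y_i (i >= 1 is the intended range).\<close>
datatype 'k expr =
    Xv nat | Yv nat | Zr | Add "'k expr" "'k expr" | Smul 'k "'k expr" | Mult "'k expr" "'k expr"

text \<open>Syntactic homogeneity: hom e p means e is homogeneous of parity p (True = odd).\<close>
inductive hom :: "'k expr \<Rightarrow> bool \<Rightarrow> bool" where
  "hom (Xv i) False"
| "hom (Yv i) True"
| "hom Zr p"
| "hom a p \<Longrightarrow> hom b p \<Longrightarrow> hom (Add a b) p"
| "hom a p \<Longrightarrow> hom (Smul c a) p"
| "hom a p \<Longrightarrow> hom b q \<Longrightarrow> hom (Mult a b) (p \<noteq> q)"

fun subst :: "(nat \<Rightarrow> 'k expr) \<Rightarrow> (nat \<Rightarrow> 'k expr) \<Rightarrow> 'k expr \<Rightarrow> 'k expr" where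
  "subst sx sy (Xv i) = sx i"
| "subst sx sy (Yv i) = sy i"
| "subst sx sy Zr = Zr"
| "subst sx sy (Add a b) = Add (subst sx sy a) (subst sx sy b)"
| "subst sx sy (Smul c a) = Smul c (subst sx sy a)"
| "subst sx sy (Mult a b) = Mult (subst sx sy a) (subst sx sy b)"

text \<open>V = K^m, realised as functions nat => 'k vanishing outside {..<m};
  the bilinear form f has Gram matrix F on {..<m}.\<close>
definition Vsp :: "nat \<Rightarrow> (nat \<Rightarrow> 'k::field) set" where
  "Vsp m = {v. \<forall>i\<ge>m. v i = 0}"

definition bform :: "nat \<Rightarrow> (nat \<Rightarrow> nat \<Rightarrow> 'k::field) \<Rightarrow> (nat \<Rightarrow> 'k) \<Rightarrow> (nat \<Rightarrow> 'k) \<Rightarrow> 'k" where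
  "bform m F u v = (\<Sum>i<m. \<Sum>j<m. u i * F i j * v j)"

definition nondeg_symm :: "nat \<Rightarrow> (nat \<Rightarrow> nat \<Rightarrow> 'k::field) \<Rightarrow> bool" where
  "nondeg_symm m F \<longleftrightarrow> (\<forall>i<m. \<forall>j<m. F i j = F j i) \<and>
     (\<forall>u\<in>Vsp m. (\<forall>w\<in>Vsp m. bform m F u w = 0) \<longrightarrow> u = (\<lambda>_. 0))"

text \<open>Elements of B_m: pairs (alpha, u) with alpha in K, u in V.\<close>
definition Bmult :: "nat \<Rightarrow> (nat \<Rightarrow> nat \<Rightarrow> 'k::field) \<Rightarrow> 'k \<times> (nat \<Rightarrow> 'k) \<Rightarrow> 'k \<times> (nat \<Rightarrow> 'k) \<Rightarrow> 'k \<times> (nat \<Rightarrow> 'k)" where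
  "Bmult m F p q = (fst p * fst q + bform m F (snd p) (snd q),
                    (\<lambda>i. fst p * snd q i + fst q * snd p i))"

fun evalB :: "nat \<Rightarrow> (nat \<Rightarrow> nat \<Rightarrow> 'k::field) \<Rightarrow> (nat \<Rightarrow> 'k) \<Rightarrow> (nat \<Rightarrow> nat \<Rightarrow> 'k)
              \<Rightarrow> 'k expr \<Rightarrow> 'k \<times> (nat \<Rightarrow> 'k)" where
  "evalB m F a v (Xv i) = (a i, (\<lambda>_. 0))"
| "evalB m F a v (Yv i) = (0, v i)"
| "evalB m F a v Zr = (0, (\<lambda>_. 0))"
| "evalB m F a v (Add e1 e2) =
     (let p = evalB m F a v e1; q = evalB m F a v e2 in (fst p + fst q, (\<lambda>i. snd p i + snd q i)))"
| "evalB m F a v (Smul c e) = (let p = evalB m F a v e in (c * fst p, (\<lambda>i. c * snd p i)))"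
| "evalB m F a v (Mult e1 e2) = Bmult m F (evalB m F a v e1) (evalB m F a v e2)"

text \<open>Graded identities Id_2(B_m): x's range over K, y's over V.\<close>
definition Id2 :: "nat \<Rightarrow> (nat \<Rightarrow> nat \<Rightarrow> 'k::field) \<Rightarrow> 'k expr set" where
  "Id2 m F = {e. \<forall>a v. (\<forall>i. v i \<in> Vsp m) \<longrightarrow> evalB m F a v e = (0, (\<lambda>_. 0))}"

text \<open>Preimage in expressions of the T_2-ideal of J(Z) generated by G \<union> Id_2(B_m).\<close>
inductive_set T2cons :: "nat \<Rightarrow> (nat \<Rightarrow> nat \<Rightarrow> 'k::field) \<Rightarrow> 'k expr set \<Rightarrow> 'k expr set"
  for m F G where
  id2: "e \<in> Id2 m F \<Longrightarrow> e \<in> T2cons m F G"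
| gen: "g \<in> G \<Longrightarrow> (\<forall>i. hom (sx i) False) \<Longrightarrow> (\<forall>i. hom (sy i) True) \<Longrightarrow>
        subst sx sy g \<in> T2cons m F G"
| add: "a \<in> T2cons m F G \<Longrightarrow> b \<in> T2cons m F G \<Longrightarrow> Add a b \<in> T2cons m F G"
| smul: "a \<in> T2cons m F G \<Longrightarrow> Smul c a \<in> T2cons m F G"
| multl: "a \<in> T2cons m F G \<Longrightarrow> Mult a b \<in> T2cons m F G"
| multr: "a \<in> T2cons m F G \<Longrightarrow> Mult b a \<in> T2cons m F G"
| resp: "a \<in> T2cons m F G \<Longrightarrow> Add b (Smul (-1) a) \<in> T2cons m F G \<Longrightarrow> b \<in> T2cons m F G"

definition Tval :: "nat \<Rightarrow> (nat \<Rightarrow> nat \<Rightarrow> 'k::field) \<Rightarrow> nat \<Rightarrow> (nat \<Rightarrow> nat \<Rightarrow> 'k) \<Rightarrow> 'k \<times> (nat \<Rightarrow> 'k)" where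
  "Tval m F k v = ((\<Sum>\<sigma>\<in>{\<sigma>. \<sigma> permutes {1..k}}.
       of_int (sign \<sigma>) * (\<Prod>a\<in>{1..k}. bform m F (v a) (v (\<sigma> a)))), (\<lambda>_. 0))"

definition Sval :: "nat \<Rightarrow> (nat \<Rightarrow> nat \<Rightarrow> 'k::field) \<Rightarrow> nat \<Rightarrow> (nat \<Rightarrow> nat \<Rightarrow> 'k) \<Rightarrow> 'k \<times> (nat \<Rightarrow> 'k)" where
  "Sval m F k v = (0, (\<lambda>i. \<Sum>\<sigma>\<in>{\<sigma>. \<sigma> permutes {1..k}}.
       of_int (sign \<sigma>) * (\<Prod>a\<in>{2..k}. bform m F (v (a - 1)) (v (\<sigma> a))) * v (\<sigma> 1) i))"

text \<open>"The image of p in J(B_m) is the element with value function val".\<close>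
definition represents :: "nat \<Rightarrow> (nat \<Rightarrow> nat \<Rightarrow> 'k::field) \<Rightarrow> 'k expr
     \<Rightarrow> ((nat \<Rightarrow> nat \<Rightarrow> 'k) \<Rightarrow> 'k \<times> (nat \<Rightarrow> 'k)) \<Rightarrow> bool" where
  "represents m F p val \<longleftrightarrow> (\<forall>a v. (\<forall>i. v i \<in> Vsp m) \<longrightarrow> evalB m F a v p = val v)"

datatype shape = Lf | Nd shape shape

fun leaves :: "shape \<Rightarrow> nat" where
  "leaves Lf = 1" | "leaves (Nd a b) = leaves a + leaves b"

fun fill :: "shape \<Rightarrow> 'k expr list \<Rightarrow> 'k expr \<times> 'k expr list" where
  "fill Lf [] = (Zr, [])"
| "fill Lf (e # es) = (e, es)"
| "fill (Nd a b) es = (let (x, r) = fill a es; (y, r') = fill b r in (Mult x y, r'))"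

definition bracket :: "shape \<Rightarrow> 'k expr list \<Rightarrow> 'k expr" where
  "bracket sh es = fst (fill sh es)"

text \<open>Factor list of x_1^{k_0} S_d T_m^{k_m} ... T_1^{k_1}; ks = [k_0,...,k_m];
  d = 0 means all delta_l = 0, d = l in {1..m} means delta_l = 1.\<close>
definition factors :: "nat \<Rightarrow> (nat \<Rightarrow> 'k expr) \<Rightarrow> (nat \<Rightarrow> 'k expr) \<Rightarrow> nat list \<Rightarrow> nat \<Rightarrow> 'k expr list" where
  "factors m Tt St ks d =
     replicate (ks ! 0) (Xv 1) @ (if d \<ge> 1 then [St d] else []) @
     concat (map (\<lambda>l. replicate (ks ! l) (Tt l)) (rev [1..<m+1]))"

definition Pset :: "nat \<Rightarrow> (nat \<Rightarrow> 'k expr) \<Rightarrow> (nat \<Rightarrow> 'k expr) \<Rightarrow> (nat list \<times> nat \<Rightarrow> shape) \<Rightarrow> 'k expr set" where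
  "Pset m Tt St shp = {bracket (shp (ks, d)) (factors m Tt St ks d) | ks d.
       length ks = m + 1 \<and> d \<le> m \<and> factors m Tt St ks d \<noteq> []}"

end

theory Submission
  imports Defs
begin


definition mul0 :: "'k::field \<times> (nat \<Rightarrow> 'k) \<Rightarrow> 'k \<times> (nat \<Rightarrow> 'k) \<Rightarrow> 'k \<times> (nat \<Rightarrow> 'k)" where
  "mul0 p q = (fst p * fst q, (\<lambda>i. fst p * snd q i + fst q * snd p i))"

fun pv :: "('k::field \<times> (nat \<Rightarrow> 'k)) list \<Rightarrow> 'k \<times> (nat \<Rightarrow> 'k)" where
  "pv [] = (1, (\<lambda>_. 0))"
| "pv (x # xs) = mul0 x (pv xs)"

definition cnt :: "('k::field \<times> (nat \<Rightarrow> 'k)) list \<Rightarrow> nat" where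
  "cnt vs = length (filter (\<lambda>x. snd x \<noteq> (\<lambda>_. 0)) vs)"

lemma mul0_assoc: "mul0 (mul0 x y) z = mul0 x (mul0 y z)"
  by (auto simp: mul0_def algebra_simps)
lemma mul0_commute: "mul0 x y = mul0 y x"
  by (auto simp: mul0_def algebra_simps)
lemma mul0_left_commute: "mul0 x (mul0 y z) = mul0 y (mul0 x z)"
  by (auto simp: mul0_def algebra_simps)
lemmas mul0_ac = mul0_assoc mul0_commute mul0_left_commute
lemma mul0_unit_left[simp]: "mul0 (1, (\<lambda>_. 0)) y = y"
  by (auto simp: mul0_def)
lemma mul0_unit_right[simp]: "mul0 y (1, (\<lambda>_. 0)) = y"
  by (auto simp: mul0_def)

lemma pv_append: "pv (xs @ ys) = mul0 (pv xs) (pv ys)"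
  by (induction xs) (auto simp: mul0_assoc)

lemma pv_snd0: "cnt vs = 0 \<Longrightarrow> snd (pv vs) = (\<lambda>_. 0)"
proof (induction vs)
  case (Cons x vs)
  then have "snd x = (\<lambda>_. 0)" "cnt vs = 0" by (auto simp: cnt_def split: if_splits)
  with Cons show ?case by (auto simp: mul0_def)
qed simp

lemma cnt_append[simp]: "cnt (xs @ ys) = cnt xs + cnt ys"
  by (simp add: cnt_def)

lemma cnt_zero: "(\<forall>x\<in>set vs. snd x = (\<lambda>_. 0)) \<Longrightarrow> cnt vs = 0"
  by (simp add: cnt_def filter_empty_conv)

lemma Bmult_mul0: "snd p = (\<lambda>_. 0) \<or> snd q = (\<lambda>_. 0) \<Longrightarrow> Bmult m F p q = mul0 p q"
  by (auto simp: Bmult_def mul0_def bform_def)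

lemma leaves_pos: "leaves sh \<ge> 1"
  by (induction sh) auto

lemma fill_eval:
  "leaves sh \<le> length es \<Longrightarrow> snd (fill sh es) = drop (leaves sh) es \<and>
    (cnt (map (evalB m F a v) (take (leaves sh) es)) \<le> 1 \<longrightarrow>
     evalB m F a v (fst (fill sh es)) = pv (map (evalB m F a v) (take (leaves sh) es)))"
proof (induction sh arbitrary: es)
  case Lf
  then obtain e es' where "es = e # es'" by (cases es) auto
  then show ?case by simp
next
  case (Nd sa sb)
  let ?ev = "evalB m F a v"
  have la: "leaves sa \<le> length es" using Nd.prems leaves_pos[of sb] by simp
  obtain x r where xr: "fill sa es = (x, r)" by fastforce
  from Nd.IH(1)[OF la] xr have r: "r = drop (leaves sa) es"
    and ex: "cnt (map ?ev (take (leaves sa) es)) \<le> 1 \<longrightarrow> ?ev x = pv (map ?ev (take (leaves sa) es))" by auto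
  have lb: "leaves sb \<le> length r" using Nd.prems r by simp
  obtain y r' where yr: "fill sb r = (y, r')" by fastforce
  from Nd.IH(2)[OF lb] yr have r': "r' = drop (leaves sb) r"
    and ey: "cnt (map ?ev (take (leaves sb) r)) \<le> 1 \<longrightarrow> ?ev y = pv (map ?ev (take (leaves sb) r))" by auto
  have fl: "fill (Nd sa sb) es = (Mult x y, r')" using xr yr by simp
  have tk: "take (leaves (Nd sa sb)) es = take (leaves sa) es @ take (leaves sb) r"
    using r by (simp add: take_add)
  show ?case
  proof
    show "snd (fill (Nd sa sb) es) = drop (leaves (Nd sa sb)) es"
      using fl r r' by (simp add: add.commute)
    show "cnt (map ?ev (take (leaves (Nd sa sb)) es)) \<le> 1 \<longrightarrow>
      ?ev (fst (fill (Nd sa sb) es)) = pv (map ?ev (take (leaves (Nd sa sb)) es))"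
    proof
      assume c: "cnt (map ?ev (take (leaves (Nd sa sb)) es)) \<le> 1"
      let ?L1 = "map ?ev (take (leaves sa) es)" and ?L2 = "map ?ev (take (leaves sb) r)"
      have c12: "cnt ?L1 + cnt ?L2 \<le> 1" using c tk by simp
      hence "cnt ?L1 = 0 \<or> cnt ?L2 = 0" by arith
      hence z: "snd (pv ?L1) = (\<lambda>_. 0) \<or> snd (pv ?L2) = (\<lambda>_. 0)" using pv_snd0 by blast
      have "?ev (fst (fill (Nd sa sb) es)) = Bmult m F (?ev x) (?ev y)" using fl by simp
      also have "\<dots> = Bmult m F (pv ?L1) (pv ?L2)" using ex ey c12 by simp
      also have "\<dots> = mul0 (pv ?L1) (pv ?L2)" using z Bmult_mul0 by blast
      also have "\<dots> = pv (map ?ev (take (leaves (Nd sa sb)) es))" using tk by (simp add: pv_append)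
      finally show "?ev (fst (fill (Nd sa sb) es)) = pv (map ?ev (take (leaves (Nd sa sb)) es))" .
    qed
  qed
qed

lemma bracket_eval:
  "leaves sh = length es \<Longrightarrow> cnt (map (evalB m F a v) es) \<le> 1 \<Longrightarrow>
   evalB m F a v (bracket sh es) = pv (map (evalB m F a v) es)"
  using fill_eval[of sh es m F a v] by (simp add: bracket_def)

lemma pv_rep_add: "pv (map g (replicate (i + j) x)) = mul0 (pv (map g (replicate i x))) (pv (map g (replicate j x)))"
  by (simp add: replicate_add pv_append)

lemma pv_rep_add2: "pv (replicate (i + j) x) = mul0 (pv (replicate i x)) (pv (replicate j x))"
  by (simp add: replicate_add pv_append)

lemma pv_concat: "(\<forall>l\<in>set L. k2 l = k1 l + kd l) \<Longrightarrow>
  pv (map g (concat (map (\<lambda>l. replicate (k2 l) (T l)) L))) =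
  mul0 (pv (map g (concat (map (\<lambda>l. replicate (k1 l) (T l)) L)))) (pv (map g (concat (map (\<lambda>l. replicate (kd l) (T l)) L))))"
  by (induction L) (simp_all add: pv_append pv_rep_add2 mul0_ac)

lemma pv_factors_gen:
  assumes h: "\<forall>l\<in>set L. k2 l = k1 l + kd l" and h0: "a2 = a1 + ad"
  shows "pv (map g (replicate a2 X @ SS @ concat (map (\<lambda>l. replicate (k2 l) (T l)) L))) =
    mul0 (pv (map g (replicate a1 X @ SS @ concat (map (\<lambda>l. replicate (k1 l) (T l)) L))))
         (pv (map g (replicate ad X @ [] @ concat (map (\<lambda>l. replicate (kd l) (T l)) L))))"
proof -
  have e: "pv (map g (concat (map (\<lambda>l. replicate (k2 l) (T l)) L))) =
    mul0 (pv (map g (concat (map (\<lambda>l. replicate (k1 l) (T l)) L)))) (pv (map g (concat (map (\<lambda>l. replicate (kd l) (T l)) L))))"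
    using pv_concat[OF h] .
  show ?thesis
    apply (simp only: map_append pv_append e h0 append_Nil)
    apply (simp only: map_replicate pv_rep_add2)
    apply (simp add: mul0_ac)
    done
qed

lemma pv_factors:
  assumes "\<forall>i\<le>m. ks2 ! i = ks1 ! i + kd ! i"
  shows "pv (map g (factors m Tt St ks2 d)) = mul0 (pv (map g (factors m Tt St ks1 d))) (pv (map g (factors m Tt St kd 0)))"
proof -
  have h: "\<forall>l\<in>set (rev [1..<m+1]). ks2 ! l = ks1 ! l + kd ! l" using assms by auto
  have h0: "ks2 ! 0 = ks1 ! 0 + kd ! 0" using assms by auto
  show ?thesis unfolding factors_def
    using pv_factors_gen[OF h h0, of g "Xv 1" "if d \<ge> 1 then [St d] else []" Tt] by simp
qed



lemma subst_id: "subst Xv Yv e = e"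
  by (induction e) auto

lemma T2cons_mono: "e \<in> T2cons m F G \<Longrightarrow> G \<subseteq> H \<Longrightarrow> e \<in> T2cons m F H"
proof (induction rule: T2cons.induct)
  case (id2 e) thus ?case by (simp add: T2cons.id2)
next
  case (gen g sx sy) thus ?case by (auto intro: T2cons.gen)
next
  case (add a b) thus ?case by (simp add: T2cons.add)
next
  case (smul a c) thus ?case by (simp add: T2cons.smul)
next
  case (multl a b) thus ?case by (simp add: T2cons.multl)
next
  case (multr a b) thus ?case by (simp add: T2cons.multr)
next
  case (resp a b) thus ?case by (meson T2cons.resp)
qed

lemma self_mem: "p \<in> T2cons m F {p}"
proof -
  have "subst Xv Yv p \<in> T2cons m F {p}"
    by (rule T2cons.gen) (auto intro: hom.intros)
  thus ?thesis by (simp add: subst_id)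
qed

lemma foldl_mem: "e \<in> T2cons m F G \<Longrightarrow> foldl Mult e xs \<in> T2cons m F G"
  by (induction xs arbitrary: e) (auto intro: T2cons.multl)

lemma foldl_eval: "(\<forall>x\<in>set xs. snd (evalB m F a v x) = (\<lambda>_. 0)) \<Longrightarrow>
  evalB m F a v (foldl Mult e xs) = mul0 (evalB m F a v e) (pv (map (evalB m F a v) xs))"
proof (induction xs arbitrary: e)
  case (Cons x xs)
  then have "evalB m F a v (foldl Mult e (x # xs)) = mul0 (Bmult m F (evalB m F a v e) (evalB m F a v x)) (pv (map (evalB m F a v) xs))"
    by simp
  also have "\<dots> = mul0 (mul0 (evalB m F a v e) (evalB m F a v x)) (pv (map (evalB m F a v) xs))"
    using Cons.prems by (simp add: Bmult_mul0)
  finally show ?case by (simp add: mul0_assoc)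
qed simp

lemma dickson: "\<forall>S::nat list set. (\<forall>x\<in>S. length x = n) \<longrightarrow>
   (\<exists>B\<subseteq>S. finite B \<and> (\<forall>x\<in>S. \<exists>b\<in>B. list_all2 (\<le>) b x))"
proof (induction n)
  case 0
  show ?case
  proof (intro allI impI)
    fix S :: "nat list set" assume "\<forall>x\<in>S. length x = 0"
    hence "S \<subseteq> {[]}" by auto
    hence "finite S" using finite_subset by blast
    thus "\<exists>B\<subseteq>S. finite B \<and> (\<forall>x\<in>S. \<exists>b\<in>B. list_all2 (\<le>) b x)"
      by (intro exI[of _ S]) (auto intro: list.rel_refl)
  qed
next
  case (Suc n)
  show ?case
  proof (intro allI impI)
    fix S :: "nat list set" assume len: "\<forall>x\<in>S. length x = Suc n"
    have decomp: "\<And>x. x \<in> S \<Longrightarrow> x = hd x # tl x"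
    proof -
      fix x assume "x \<in> S" hence "length x = Suc n" using len by auto
      thus "x = hd x # tl x" by (cases x) auto
    qed
    have lift: "\<exists>C\<subseteq>S'. finite C \<and> (\<forall>x\<in>S'. \<exists>b\<in>C. list_all2 (\<le>) (tl b) (tl x))"
      if "S' \<subseteq> S" for S'
    proof -
      have "\<forall>x\<in>tl ` S'. length x = n" using len that by auto
      then have "\<exists>B\<subseteq>tl ` S'. finite B \<and> (\<forall>x\<in>tl ` S'. \<exists>b\<in>B. list_all2 (\<le>) b x)"
        using Suc.IH by blast
      then obtain B0 where B0: "B0 \<subseteq> tl ` S'" "finite B0" "\<forall>x\<in>tl ` S'. \<exists>b\<in>B0. list_all2 (\<le>) b x"
        by blast
      obtain C where C: "C \<subseteq> S'" "finite C" "B0 = tl ` C"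
        using finite_subset_image[OF B0(2) B0(1)] by blast
      have "\<forall>x\<in>S'. \<exists>b\<in>C. list_all2 (\<le>) (tl b) (tl x)"
      proof
        fix x assume "x \<in> S'"
        then obtain b where "b \<in> B0" "list_all2 (\<le>) b (tl x)" using B0(3) by blast
        then obtain c where "c \<in> C" "tl c = b" using C(3) by blast
        thus "\<exists>b\<in>C. list_all2 (\<le>) (tl b) (tl x)" using \<open>list_all2 (\<le>) b (tl x)\<close> by blast
      qed
      thus ?thesis using C(1,2) by blast
    qed
    obtain C1 where C1: "C1 \<subseteq> S" "finite C1" "\<forall>x\<in>S. \<exists>b\<in>C1. list_all2 (\<le>) (tl b) (tl x)"
      using lift[of S] by blast
    define M where "M = Max (insert 0 (hd ` C1))"
    have hM: "\<And>b. b \<in> C1 \<Longrightarrow> hd b \<le> M" unfolding M_def using C1(2) by auto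
    have "\<forall>c. \<exists>C\<subseteq>{x\<in>S. hd x = c}. finite C \<and> (\<forall>x\<in>{x\<in>S. hd x = c}. \<exists>b\<in>C. list_all2 (\<le>) (tl b) (tl x))"
      by (intro allI lift) blast
    then have "\<exists>Cc. \<forall>c. Cc c \<subseteq> {x\<in>S. hd x = c} \<and> finite (Cc c) \<and>
        (\<forall>x\<in>{x\<in>S. hd x = c}. \<exists>b\<in>Cc c. list_all2 (\<le>) (tl b) (tl x))"
      by (rule choice)
    then obtain Cc where Cc: "\<And>c. Cc c \<subseteq> {x\<in>S. hd x = c} \<and> finite (Cc c) \<and>
        (\<forall>x\<in>{x\<in>S. hd x = c}. \<exists>b\<in>Cc c. list_all2 (\<le>) (tl b) (tl x))"
      by blast
    define B where "B = C1 \<union> (\<Union>c<M. Cc c)"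
    have "B \<subseteq> S" unfolding B_def using C1(1) Cc by blast
    moreover have "finite B" unfolding B_def using C1(2) Cc by auto
    moreover have "\<forall>x\<in>S. \<exists>b\<in>B. list_all2 (\<le>) b x"
    proof
      fix x assume x: "x \<in> S"
      show "\<exists>b\<in>B. list_all2 (\<le>) b x"
      proof (cases "hd x < M")
        case True
        then obtain b where b: "b \<in> Cc (hd x)" "list_all2 (\<le>) (tl b) (tl x)"
          using Cc[of "hd x"] x by blast
        have bS: "b \<in> S" and "hd b = hd x" using Cc[of "hd x"] b(1) by auto
        hence "list_all2 (\<le>) b x" using b(2)
          by (subst decomp[OF x], subst decomp[OF bS]) simp
        moreover have "b \<in> B" unfolding B_def using True b(1) by blast
        ultimately show ?thesis by blast
      next
        case False
        then obtain b where b: "b \<in> C1" "list_all2 (\<le>) (tl b) (tl x)"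
          using C1(3) x by blast
        have "b \<in> S" using C1(1) b(1) by auto
        have "hd b \<le> hd x" using hM[OF b(1)] False by simp
        hence "list_all2 (\<le>) b x" using b(2)
          by (subst decomp[OF x], subst decomp[OF \<open>b \<in> S\<close>]) simp
        moreover have "b \<in> B" unfolding B_def using b(1) by blast
        ultimately show ?thesis by blast
      qed
    qed
    ultimately show "\<exists>B\<subseteq>S. finite B \<and> (\<forall>x\<in>S. \<exists>b\<in>B. list_all2 (\<le>) b x)" by blast
  qed
qed



lemma factors_set: "x \<in> set (factors m Tt St ks d) \<Longrightarrow> x = Xv 1 \<or> (\<exists>l\<in>{1..m}. x = Tt l) \<or> (d \<ge> 1 \<and> x = St d)"
  unfolding factors_def by (auto split: if_splits)

lemma cnt_le_length: "cnt vs \<le> length vs"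
  by (simp add: cnt_def)

lemma step:
  assumes rT: "\<And>k. k \<in> {1..m} \<Longrightarrow> represents m F (Tt k) (Tval m F k)"
    and lv: "\<And>ks d. length ks = m + 1 \<Longrightarrow> d \<le> m \<Longrightarrow> factors m Tt St ks d \<noteq> [] \<Longrightarrow>
         leaves (shp (ks, d)) = length (factors m Tt St ks d)"
    and l1: "length ks1 = m + 1" and l2: "length ks2 = m + 1" and d: "d \<le> m"
    and n1: "factors m Tt St ks1 d \<noteq> []" and n2: "factors m Tt St ks2 d \<noteq> []"
    and le: "list_all2 (\<le>) ks1 ks2"
  shows "bracket (shp (ks2, d)) (factors m Tt St ks2 d) \<in> T2cons m F {bracket (shp (ks1, d)) (factors m Tt St ks1 d)}"
proof -
  define p where "p = bracket (shp (ks1, d)) (factors m Tt St ks1 d)"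
  define q where "q = bracket (shp (ks2, d)) (factors m Tt St ks2 d)"
  define kd where "kd = map (\<lambda>i. ks2 ! i - ks1 ! i) [0..<m+1]"
  define E where "E = foldl Mult p (factors m Tt St kd 0)"
  have hk: "\<forall>i\<le>m. ks2 ! i = ks1 ! i + kd ! i"
  proof (intro allI impI)
    fix i assume "i \<le> m"
    hence "ks1 ! i \<le> ks2 ! i" using list_all2_nthD[OF le, of i] l1 by simp
    thus "ks2 ! i = ks1 ! i + kd ! i" unfolding kd_def using \<open>i \<le> m\<close>
      by (simp del: upt_Suc)
  qed
  have Emem: "E \<in> T2cons m F {p}" unfolding E_def by (rule foldl_mem[OF self_mem])
  have eqv: "evalB m F a v q = evalB m F a v E" if vs: "\<forall>i. v i \<in> Vsp m" for a v
  proof -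
    let ?ev = "evalB m F a v"
    have scal: "snd (?ev x) = (\<lambda>_. 0)" if "x = Xv 1 \<or> (\<exists>l\<in>{1..m}. x = Tt l)" for x
    proof -
      { fix l assume l: "l \<in> {1..m}" "x = Tt l"
        hence "?ev x = Tval m F l v" using rT[OF l(1)] vs by (simp add: represents_def)
        hence ?thesis by (simp add: Tval_def) }
      thus ?thesis using that by auto
    qed
    have cnt1: "cnt (map ?ev (factors m Tt St ks d)) \<le> 1" for ks
    proof -
      have "factors m Tt St ks d = replicate (ks ! 0) (Xv 1) @ (if d \<ge> 1 then [St d] else []) @
         concat (map (\<lambda>l. replicate (ks ! l) (Tt l)) (rev [1..<m+1]))" by (simp add: factors_def)
      moreover have "cnt (map ?ev (replicate (ks ! 0) (Xv 1))) = 0"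
        by (rule cnt_zero) (auto intro: scal)
      moreover have "cnt (map ?ev (concat (map (\<lambda>l. replicate (ks ! l) (Tt l)) (rev [1..<m+1])))) = 0"
        by (rule cnt_zero) (auto intro!: scal)
      moreover have "cnt (map ?ev (if d \<ge> 1 then [St d] else [])) \<le> 1"
        using cnt_le_length[of "map ?ev (if d \<ge> 1 then [St d] else [])"] by auto
      ultimately show ?thesis by (simp del: upt_Suc)
    qed
    have sc0: "\<forall>x\<in>set (factors m Tt St kd 0). snd (?ev x) = (\<lambda>_. 0)"
      using factors_set[of _ m Tt St kd 0] scal by auto
    have lkd: "length kd = m + 1" unfolding kd_def by simp
    have "?ev q = pv (map ?ev (factors m Tt St ks2 d))"
      unfolding q_def by (rule bracket_eval[OF lv[OF l2 d n2] cnt1])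
    also have "\<dots> = mul0 (pv (map ?ev (factors m Tt St ks1 d))) (pv (map ?ev (factors m Tt St kd 0)))"
      by (rule pv_factors[OF hk])
    also have "pv (map ?ev (factors m Tt St ks1 d)) = ?ev p"
      unfolding p_def by (rule bracket_eval[OF lv[OF l1 d n1] cnt1, symmetric])
    also have "mul0 (?ev p) (pv (map ?ev (factors m Tt St kd 0))) = ?ev E"
      unfolding E_def by (rule foldl_eval[OF sc0, symmetric])
    finally show ?thesis .
  qed
  have "Add q (Smul (-1) E) \<in> Id2 m F"
    unfolding Id2_def using eqv by (auto simp: Let_def)
  hence "Add q (Smul (-1) E) \<in> T2cons m F {p}" by (rule T2cons.id2)
  hence "q \<in> T2cons m F {p}" using Emem by (meson T2cons.resp)
  thus ?thesis unfolding p_def q_def .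
qed



theorem lemma4p4:
  fixes m :: nat and F :: "nat \<Rightarrow> nat \<Rightarrow> 'k::field_char_0"
    and Tt St :: "nat \<Rightarrow> 'k expr" and shp :: "nat list \<times> nat \<Rightarrow> shape"
  assumes "m > 1"
    and "nondeg_symm m F"
    and "\<And>k. k \<in> {1..m} \<Longrightarrow> represents m F (Tt k) (Tval m F k)"
    and "\<And>k. k \<in> {1..m} \<Longrightarrow> represents m F (St k) (Sval m F k)"
    and "\<And>ks d. length ks = m + 1 \<Longrightarrow> d \<le> m \<Longrightarrow> factors m Tt St ks d \<noteq> [] \<Longrightarrow>
         leaves (shp (ks, d)) = length (factors m Tt St ks d)"
  shows "\<forall>S \<subseteq> Pset m Tt St shp. \<exists>S' \<subseteq> S. finite S' \<and> S \<subseteq> T2cons m F S'"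
proof (intro allI impI)
  fix S assume SP: "S \<subseteq> Pset m Tt St shp"
  define P where "P = (\<lambda>ks d. bracket (shp (ks, d)) (factors m Tt St ks d))"
  define I where "I = (\<lambda>d. {ks. length ks = m + 1 \<and> factors m Tt St ks d \<noteq> [] \<and> P ks d \<in> S})"
  have "\<forall>d. \<exists>B\<subseteq>I d. finite B \<and> (\<forall>x\<in>I d. \<exists>b\<in>B. list_all2 (\<le>) b x)"
  proof
    fix d
    have "\<forall>x\<in>I d. length x = m + 1" unfolding I_def by auto
    thus "\<exists>B\<subseteq>I d. finite B \<and> (\<forall>x\<in>I d. \<exists>b\<in>B. list_all2 (\<le>) b x)"
      using dickson[of "m+1"] by blast
  qed
  hence "\<exists>B. \<forall>d. B d \<subseteq> I d \<and> finite (B d) \<and> (\<forall>x\<in>I d. \<exists>b\<in>B d. list_all2 (\<le>) b x)"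
    by (rule choice)
  then obtain B where B: "\<And>d. B d \<subseteq> I d \<and> finite (B d) \<and> (\<forall>x\<in>I d. \<exists>b\<in>B d. list_all2 (\<le>) b x)"
    by blast
  define S' where "S' = (\<Union>d\<in>{..m}. (\<lambda>ks. P ks d) ` B d)"
  have "S' \<subseteq> S" unfolding S'_def using B unfolding I_def by blast
  moreover have "finite S'" unfolding S'_def using B by auto
  moreover have "S \<subseteq> T2cons m F S'"
  proof
    fix x assume xS: "x \<in> S"
    then obtain ks d where x: "x = P ks d" "length ks = m + 1" "d \<le> m" "factors m Tt St ks d \<noteq> []"
      using SP unfolding Pset_def P_def by blast
    hence "ks \<in> I d" unfolding I_def using xS by auto
    then obtain b where b: "b \<in> B d" "list_all2 (\<le>) b ks" using B by blast
    hence bI: "b \<in> I d" using B by blast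
    have "x \<in> T2cons m F {P b d}"
      unfolding x(1) P_def
      by (rule step[OF assms(3) assms(5)]) (use x bI b in \<open>auto simp: I_def\<close>)
    moreover have "{P b d} \<subseteq> S'" unfolding S'_def using b(1) x(3) by blast
    ultimately show "x \<in> T2cons m F S'" by (rule T2cons_mono)
  qed
  ultimately show "\<exists>S' \<subseteq> S. finite S' \<and> S \<subseteq> T2cons m F S'" by blast
qed

end
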